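(* Let $T,d\ge1$, $\gamma>0$, $\beta>0$, and for each $t\in\{1,\dots,T\}$ let $(x_{t1},y_{t1}),\dots,(x_{tm_t},y_{tm_t})\in\mathbb{R}^d\times\mathbb{R}$ be given, with $X_t=[x_{t1},\dots,x_{tm_t}]$. Let $l$ be a loss that is $c$-admissible with respect to the class of linear functions. Let $\sigma_{ti}$ ($t=1,\dots,T$, $i=1,\dots,m_t$) be independent Rademacher variables (uniform on $\{-1,1\}$), and define $$\mathfrak{R}_n(l\circ(A,a_0,U))=2E_\sigma\sup_{a_t,a_0,U}\sum_{t=1}^{T}\sum_{i=1}^{m_t}\sigma_{ti}\,l\big(y_{ti},\langle a_t+a_0,U^Tx_{ti}\rangle\big),$$ where the supremum is over $A=[a_1,\dots,a_T]\in\mathbb{R}^{d\times T}$, $a_0\in\mathbb{R}^d$ and $U\in\mathbb{R}^{d\times d}$ with $U^TU=I$, $\|A\|_{2,1}^2\le T/\gamma$ and $\|a_0\|_2^2\le1/\beta$. Then $$\mathfrak{R}_n(l\circ(A,a_0,U))\le 2c\left(\sqrt{\frac{T}{\gamma}}+\sqrt{\frac1\beta}\right)\sqrt{\sum_{t=1}^{T}m_tS(X_t)},$$ where $S(X_t)=\frac1{m_t}\sum_{i=1}^{m_t}\|x_{ti}\|_2^2$.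
   Context: For $A\in\mathbb{R}^{d\times T}$ with rows $a^1,\dots,a^d$, $\|A\|_{2,1}=\sum_{i=1}^d\|a^i\|_2$. A loss $l$ is $c$-admissible with respect to a hypothesis class $H$ if there is $c\ge0$ such that for all $h,h'\in H$ and all $(x,y)$, $|l(y,h(x))-l(y,h'(x))|\le c|h(x)-h'(x)|$. *)

theory Defs
  imports "HOL-Analysis.Analysis"
begin

definition admissible :: "real \<Rightarrow> (real \<Rightarrow> real \<Rightarrow> real) \<Rightarrow> ('a \<Rightarrow> real) set \<Rightarrow> bool" where
  "admissible c l H \<longleftrightarrow> c \<ge> 0 \<and>
     (\<forall>h\<in>H. \<forall>h'\<in>H. \<forall>x y. \<bar>l y (h x) - l y (h' x)\<bar> \<le> c * \<bar>h x - h' x\<bar>)"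

text \<open>(2,1)-norm of the d x T matrix A = [a_1,...,a_T] (columns A 1, ..., A T):
  sum over rows i of the Euclidean norm of the i-th row.\<close>
definition norm21 :: "nat \<Rightarrow> (nat \<Rightarrow> real^'d) \<Rightarrow> real" where
  "norm21 T A = (\<Sum>i\<in>UNIV. sqrt (\<Sum>t\<in>{1..T}. (A t $ i)^2))"

definition rademacher_exp :: "'i set \<Rightarrow> (('i \<Rightarrow> real) \<Rightarrow> real) \<Rightarrow> real" where
  "rademacher_exp I F = (\<Sum>\<sigma>\<in>PiE I (\<lambda>_. {-1, 1}). F \<sigma>) / 2 ^ card I"

definition sample_S :: "nat \<Rightarrow> (nat \<Rightarrow> real^'d) \<Rightarrow> real" where
  "sample_S mt xs = (\<Sum>i\<in>{1..mt}. (norm (xs i))^2) / real mt"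

end

theory Submission imports Defs begin

lemma orth_norm:
  fixes U :: "real^'d^'d"
  assumes "transpose U ** U = mat 1"
  shows "norm (transpose U *v v) = norm v"
proof -
  have o: "U ** transpose U = mat 1" using assms orthogonal_matrix orthogonal_matrix_def by blast
  have "(transpose U *v v) \<bullet> (transpose U *v v) = (v v* U) \<bullet> (transpose U *v v)" by simp
  also have "\<dots> = v \<bullet> (U *v (transpose U *v v))" by (rule dot_lmul_matrix)
  also have "\<dots> = v \<bullet> v" by (simp only: matrix_vector_mul_assoc o matrix_vector_mul_lid)
  finally show ?thesis by (simp add: norm_eq_sqrt_inner)
qed

lemma flip_sum:
  fixes F :: "('i \<Rightarrow> real) \<Rightarrow> 'b::comm_monoid_add"
  assumes "k \<in> I"
  shows "(\<Sum>\<sigma>\<in>PiE I (\<lambda>_. {-1,1::real}). F (\<sigma>(k := - \<sigma> k))) = (\<Sum>\<sigma>\<in>PiE I (\<lambda>_. {-1,1}). F \<sigma>)"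
proof (rule sum.reindex_bij_witness[where i="\<lambda>\<sigma>. \<sigma>(k := - \<sigma> k)" and j="\<lambda>\<sigma>. \<sigma>(k := - \<sigma> k)"])
qed (use assms in \<open>auto simp: PiE_iff extensional_def\<close>)

lemma key:
  fixes g f :: "'p \<Rightarrow> real"
  assumes P: "P \<noteq> {}" and s: "\<bar>s\<bar> = 1" and c: "c \<ge> 0"
    and bg: "\<And>p. p\<in>P \<Longrightarrow> \<bar>g p\<bar> \<le> Bg" and bf: "\<And>p. p\<in>P \<Longrightarrow> \<bar>f p\<bar> \<le> Bf"
    and L: "\<And>u v. \<bar>\<phi> u - \<phi> v\<bar> \<le> c * \<bar>u - v\<bar>"
  shows "(SUP p\<in>P. s * \<phi> (f p) + g p) + (SUP p\<in>P. (- s) * \<phi> (f p) + g p)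
     \<le> (SUP p\<in>P. s * (c * f p) + g p) + (SUP p\<in>P. (- s) * (c * f p) + g p)"
proof -
  define R1 where "R1 = (SUP p\<in>P. s * (c * f p) + g p)"
  define R2 where "R2 = (SUP p\<in>P. (- s) * (c * f p) + g p)"
  have cb: "\<bar>s' * (c * f p)\<bar> \<le> c * Bf" if "\<bar>s'\<bar> = 1" "p \<in> P" for s' p
  proof -
    have "\<bar>s' * (c * f p)\<bar> = c * \<bar>f p\<bar>" using that c by (simp add: abs_mult)
    also have "\<dots> \<le> c * Bf" using bf[OF that(2)] c by (simp add: mult_left_mono)
    finally show ?thesis .
  qed
  have b1: "bdd_above ((\<lambda>p. s * (c * f p) + g p) ` P)"
  proof (rule bdd_aboveI2)
    fix p assume "p \<in> P" thus "s * (c * f p) + g p \<le> c * Bf + Bg" using cb[OF s] bg by (smt (verit))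
  qed
  have b2: "bdd_above ((\<lambda>p. (- s) * (c * f p) + g p) ` P)"
  proof (rule bdd_aboveI2)
    fix p assume "p \<in> P" thus "(- s) * (c * f p) + g p \<le> c * Bf + Bg" using cb[of "-s"] s bg by (smt (verit))
  qed
  have u1: "s * (c * f p) + g p \<le> R1" if "p \<in> P" for p unfolding R1_def using b1 that by (rule cSUP_upper2) simp
  have u2: "(- s) * (c * f p) + g p \<le> R2" if "p \<in> P" for p unfolding R2_def using b2 that by (rule cSUP_upper2) simp
  have pq: "(s * \<phi> (f p) + g p) + ((- s) * \<phi> (f q) + g q) \<le> R1 + R2" if "p \<in> P" "q \<in> P" for p q
  proof -
    have "s * (\<phi> (f p) - \<phi> (f q)) \<le> \<bar>\<phi> (f p) - \<phi> (f q)\<bar>" proof -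
      have "s * (\<phi> (f p) - \<phi> (f q)) \<le> \<bar>s * (\<phi> (f p) - \<phi> (f q))\<bar>" by (rule abs_ge_self)
      thus ?thesis using s by (simp add: abs_mult)
    qed
    also have "\<dots> \<le> c * \<bar>f p - f q\<bar>" by (rule L)
    finally have h: "s * (\<phi> (f p) - \<phi> (f q)) \<le> c * \<bar>f p - f q\<bar>" .
    have "s = 1 \<or> s = -1" using s by linarith
    moreover have "f p \<ge> f q \<or> f p \<le> f q" by linarith
    ultimately have "c * \<bar>f p - f q\<bar> = s * c * (f p - f q) \<or> c * \<bar>f p - f q\<bar> = s * c * (f q - f p)"
      by (auto simp: abs_if algebra_simps)
    thus ?thesis
    proof
      assume e: "c * \<bar>f p - f q\<bar> = s * c * (f p - f q)"
      have "(s * \<phi> (f p) + g p) + ((- s) * \<phi> (f q) + g q) \<le> (s * (c * f p) + g p) + ((- s) * (c * f q) + g q)"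
        using h e by (simp add: algebra_simps)
      also have "\<dots> \<le> R1 + R2" using u1[OF that(1)] u2[OF that(2)] by linarith
      finally show ?thesis .
    next
      assume e: "c * \<bar>f p - f q\<bar> = s * c * (f q - f p)"
      have "(s * \<phi> (f p) + g p) + ((- s) * \<phi> (f q) + g q) \<le> (s * (c * f q) + g q) + ((- s) * (c * f p) + g p)"
        using h e by (simp add: algebra_simps)
      also have "\<dots> \<le> R1 + R2" using u1[OF that(2)] u2[OF that(1)] by linarith
      finally show ?thesis .
    qed
  qed
  have "(SUP p\<in>P. s * \<phi> (f p) + g p) \<le> R1 + R2 - ((- s) * \<phi> (f q) + g q)" if "q \<in> P" for q
    using pq[OF _ that] by (intro cSUP_least[OF P]) (smt (verit))
  hence "(SUP q\<in>P. (- s) * \<phi> (f q) + g q) \<le> R1 + R2 - (SUP p\<in>P. s * \<phi> (f p) + g p)"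
    by (intro cSUP_least[OF P]) (smt (verit))
  thus ?thesis unfolding R1_def R2_def by linarith
qed

lemma split_sum:
  assumes "finite I" "k \<in> I"
  shows "(\<Sum>j\<in>I. \<tau> j * (h(k := H)) j p) = \<tau> k * H p + (\<Sum>j\<in>I - {k}. \<tau> j * h j p)"
proof -
  have "(\<Sum>j\<in>I. \<tau> j * (h(k := H)) j p) = \<tau> k * H p + (\<Sum>j\<in>I - {k}. \<tau> j * (h(k := H)) j p)"
    using assms by (simp add: sum.remove)
  also have "(\<Sum>j\<in>I - {k}. \<tau> j * (h(k := H)) j p) = (\<Sum>j\<in>I - {k}. \<tau> j * h j p)"
    by (rule sum.cong) auto
  finally show ?thesis .
qed

lemma rexp_mono:
  assumes "\<And>\<sigma>. \<sigma> \<in> PiE I (\<lambda>_. {-1,1}) \<Longrightarrow> F \<sigma> \<le> G \<sigma>"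
  shows "rademacher_exp I F \<le> rademacher_exp I G"
  unfolding rademacher_exp_def by (rule divide_right_mono) (auto intro!: sum_mono assms)

lemma step:
  fixes h :: "'i \<Rightarrow> 'p \<Rightarrow> real"
  assumes fin: "finite I" and k: "k \<in> I" and P: "P \<noteq> {}" and c: "c \<ge> 0"
    and bh: "\<And>j p. j \<in> I \<Longrightarrow> p \<in> P \<Longrightarrow> \<bar>h j p\<bar> \<le> B j"
    and bf: "\<And>p. p\<in>P \<Longrightarrow> \<bar>f p\<bar> \<le> Bf"
    and L: "\<And>u v. \<bar>\<phi> u - \<phi> v\<bar> \<le> c * \<bar>u - v\<bar>"
  shows "rademacher_exp I (\<lambda>\<sigma>. SUP p\<in>P. \<Sum>j\<in>I. \<sigma> j * (h(k := \<lambda>p. \<phi> (f p))) j p)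
       \<le> rademacher_exp I (\<lambda>\<sigma>. SUP p\<in>P. \<Sum>j\<in>I. \<sigma> j * (h(k := \<lambda>p. c * f p)) j p)"
proof -
  let ?\<Omega> = "PiE I (\<lambda>_. {-1,1::real})"
  define F where "F = (\<lambda>\<sigma>. SUP p\<in>P. \<Sum>j\<in>I. \<sigma> j * (h(k := \<lambda>p. \<phi> (f p))) j p)"
  define G where "G = (\<lambda>\<sigma>. SUP p\<in>P. \<Sum>j\<in>I. \<sigma> j * (h(k := \<lambda>p. c * f p)) j p)"
  have pw: "F \<sigma> + F (\<sigma>(k := - \<sigma> k)) \<le> G \<sigma> + G (\<sigma>(k := - \<sigma> k))" if \<sigma>: "\<sigma> \<in> ?\<Omega>" for \<sigma>
  proof -
    define g where "g = (\<lambda>p. \<Sum>j\<in>I - {k}. \<sigma> j * h j p)"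
    have sg: "\<sigma> j \<in> {-1,1}" if "j \<in> I" for j using \<sigma> that by (auto simp: PiE_iff)
    have s: "\<bar>\<sigma> k\<bar> = 1" using sg[OF k] by auto
    have eq: "(\<Sum>j\<in>I - {k}. (\<sigma>(k := - \<sigma> k)) j * h j p) = g p" for p
      unfolding g_def by (rule sum.cong) auto
    have bg: "\<bar>g p\<bar> \<le> (\<Sum>j\<in>I - {k}. B j)" if "p \<in> P" for p
    proof -
      have "\<bar>g p\<bar> \<le> (\<Sum>j\<in>I - {k}. \<bar>\<sigma> j * h j p\<bar>)" unfolding g_def by (rule sum_abs)
      also have "\<dots> \<le> (\<Sum>j\<in>I - {k}. B j)"
      proof (rule sum_mono)
        fix j assume j: "j \<in> I - {k}"
        have "\<bar>\<sigma> j\<bar> = 1" using sg[of j] j by auto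
        thus "\<bar>\<sigma> j * h j p\<bar> \<le> B j" using bh[of j p] j that by (simp add: abs_mult)
      qed
      finally show ?thesis .
    qed
    have "F \<sigma> + F (\<sigma>(k := - \<sigma> k)) = (SUP p\<in>P. \<sigma> k * \<phi> (f p) + g p) + (SUP p\<in>P. (- \<sigma> k) * \<phi> (f p) + g p)"
      unfolding F_def split_sum[OF fin k] eq by (simp add: g_def)
    also have "\<dots> \<le> (SUP p\<in>P. \<sigma> k * (c * f p) + g p) + (SUP p\<in>P. (- \<sigma> k) * (c * f p) + g p)"
      by (rule key[OF P s c bg bf L])
    also have "\<dots> = G \<sigma> + G (\<sigma>(k := - \<sigma> k))"
      unfolding G_def split_sum[OF fin k] eq by (simp add: g_def)
    finally show ?thesis .
  qed
  have "2 * (\<Sum>\<sigma>\<in>?\<Omega>. F \<sigma>) = (\<Sum>\<sigma>\<in>?\<Omega>. F \<sigma> + F (\<sigma>(k := - \<sigma> k)))"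
    by (simp add: sum.distrib flip_sum[OF k])
  also have "\<dots> \<le> (\<Sum>\<sigma>\<in>?\<Omega>. G \<sigma> + G (\<sigma>(k := - \<sigma> k)))" by (rule sum_mono) (rule pw)
  also have "\<dots> = 2 * (\<Sum>\<sigma>\<in>?\<Omega>. G \<sigma>)"
    by (simp add: sum.distrib flip_sum[OF k])
  finally have "(\<Sum>\<sigma>\<in>?\<Omega>. F \<sigma>) \<le> (\<Sum>\<sigma>\<in>?\<Omega>. G \<sigma>)" by simp
  thus ?thesis unfolding rademacher_exp_def F_def[symmetric] G_def[symmetric]
    by (intro divide_right_mono) simp_all
qed

lemma contraction:
  fixes f :: "'i \<Rightarrow> 'p \<Rightarrow> real"
  assumes fin: "finite I" and P: "P \<noteq> {}" and c: "c \<ge> 0"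
    and bf: "\<And>j p. j \<in> I \<Longrightarrow> p \<in> P \<Longrightarrow> \<bar>f j p\<bar> \<le> B j"
    and L: "\<And>j u v. j \<in> I \<Longrightarrow> \<bar>\<phi> j u - \<phi> j v\<bar> \<le> c * \<bar>u - v\<bar>"
  shows "rademacher_exp I (\<lambda>\<sigma>. SUP p\<in>P. \<Sum>j\<in>I. \<sigma> j * \<phi> j (f j p))
       \<le> rademacher_exp I (\<lambda>\<sigma>. SUP p\<in>P. \<Sum>j\<in>I. \<sigma> j * (c * f j p))"
proof -
  define R where "R = rademacher_exp I (\<lambda>\<sigma>. SUP p\<in>P. \<Sum>j\<in>I. \<sigma> j * (c * f j p))"
  define B' where "B' = (\<lambda>j. \<bar>\<phi> j 0\<bar> + c * B j)"
  have "J \<subseteq> I \<longrightarrow> rademacher_exp I (\<lambda>\<sigma>. SUP p\<in>P. \<Sum>j\<in>I. \<sigma> j * (if j \<in> J then \<phi> j (f j p) else c * f j p)) \<le> R"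
    if "finite J" for J
    using that
  proof (induction J rule: finite_induct)
    case empty
    show ?case unfolding R_def by simp
  next
    case (insert k J)
    show ?case
    proof
      assume sub: "insert k J \<subseteq> I"
      define h where "h = (\<lambda>j p. if j \<in> J then \<phi> j (f j p) else c * f j p)"
      have k: "k \<in> I" using sub by auto
      have e1: "\<And>j p. (if j \<in> insert k J then \<phi> j (f j p) else c * f j p) = (h(k := \<lambda>p. \<phi> k (f k p))) j p"
        unfolding h_def by auto
      have e2: "h = h(k := \<lambda>p. c * f k p)" unfolding h_def using insert.hyps(2) by (auto simp: fun_eq_iff)
      have bh: "\<bar>h j p\<bar> \<le> B' j" if "j \<in> I" "p \<in> P" for j p
      proof -
        have b: "\<bar>f j p\<bar> \<le> B j" using bf that by blast
        have "\<bar>\<phi> j (f j p) - \<phi> j 0\<bar> \<le> c * \<bar>f j p - 0\<bar>" using L that(1) by blast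
        moreover have "c * \<bar>f j p\<bar> \<le> c * B j" using b c by (simp add: mult_left_mono)
        moreover have "\<bar>c * f j p\<bar> = c * \<bar>f j p\<bar>" using c by (simp add: abs_mult)
        ultimately show ?thesis unfolding h_def B'_def by auto
      qed
      have "rademacher_exp I (\<lambda>\<sigma>. SUP p\<in>P. \<Sum>j\<in>I. \<sigma> j * (if j \<in> insert k J then \<phi> j (f j p) else c * f j p))
          = rademacher_exp I (\<lambda>\<sigma>. SUP p\<in>P. \<Sum>j\<in>I. \<sigma> j * (h(k := \<lambda>p. \<phi> k (f k p))) j p)"
        by (simp only: e1)
      also have "\<dots> \<le> rademacher_exp I (\<lambda>\<sigma>. SUP p\<in>P. \<Sum>j\<in>I. \<sigma> j * (h(k := \<lambda>p. c * f k p)) j p)"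
        by (rule step[OF fin k P c bh, where f="\<lambda>p. f k p" and Bf="B k" and \<phi>="\<phi> k"]) (use bf k L in auto)
      also have "\<dots> = rademacher_exp I (\<lambda>\<sigma>. SUP p\<in>P. \<Sum>j\<in>I. \<sigma> j * h j p)"
        by (simp only: e2[symmetric])
      also have "\<dots> \<le> R" using insert.IH sub unfolding h_def by blast
      finally show "rademacher_exp I (\<lambda>\<sigma>. SUP p\<in>P. \<Sum>j\<in>I. \<sigma> j * (if j \<in> insert k J then \<phi> j (f j p) else c * f j p)) \<le> R" .
    qed
  qed
  from this[OF fin] show ?thesis unfolding R_def by simp
qed

lemma card_Omega: "finite I \<Longrightarrow> card (PiE I (\<lambda>_. {-1,1::real})) = 2 ^ card I"
  by (simp add: card_PiE numeral_2_eq_2)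

lemma rexp_lin: "rademacher_exp I (\<lambda>\<sigma>. a * F \<sigma> + b * G \<sigma>) = a * rademacher_exp I F + b * rademacher_exp I G"
  unfolding rademacher_exp_def by (simp add: sum.distrib sum_distrib_left add_divide_distrib)

lemma rexp_sum: "rademacher_exp I (\<lambda>\<sigma>. \<Sum>t\<in>S. F t \<sigma>) = (\<Sum>t\<in>S. rademacher_exp I (F t))"
  unfolding rademacher_exp_def by (simp add: sum.swap[of _ S] sum_divide_distrib)

lemma corr:
  assumes fin: "finite I" and a: "a \<in> I" and b: "b \<in> I"
  shows "(\<Sum>\<sigma>\<in>PiE I (\<lambda>_. {-1,1::real}). \<sigma> a * \<sigma> b) = (if a = b then 2 ^ card I else 0)"
proof (cases "a = b")
  case True
  have "(\<Sum>\<sigma>\<in>PiE I (\<lambda>_. {-1,1::real}). \<sigma> a * \<sigma> b) = (\<Sum>\<sigma>\<in>PiE I (\<lambda>_. {-1,1::real}). 1)"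
    by (rule sum.cong) (use a True in \<open>auto simp: PiE_iff\<close>)
  thus ?thesis using True fin by (simp add: card_Omega)
next
  case False
  let ?S = "(\<Sum>\<sigma>\<in>PiE I (\<lambda>_. {-1,1::real}). \<sigma> a * \<sigma> b)"
  have "?S = (\<Sum>\<sigma>\<in>PiE I (\<lambda>_. {-1,1::real}). (\<sigma>(a := - \<sigma> a)) a * (\<sigma>(a := - \<sigma> a)) b)"
    by (rule flip_sum[OF a, symmetric])
  also have "\<dots> = - ?S" using False by (simp add: sum_negf)
  finally show ?thesis using False by simp
qed

lemma rad_sq:
  fixes X :: "'i \<Rightarrow> 'v::real_inner"
  assumes fin: "finite I" and J: "J \<subseteq> I"
  shows "rademacher_exp I (\<lambda>\<sigma>. (norm (\<Sum>j\<in>J. \<sigma> j *\<^sub>R X j))^2) = (\<Sum>j\<in>J. (norm (X j))^2)"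
proof -
  let ?\<Omega> = "PiE I (\<lambda>_. {-1,1::real})"
  have finJ: "finite J" using fin J finite_subset by blast
  have e: "(norm (\<Sum>j\<in>J. \<sigma> j *\<^sub>R X j))^2 = (\<Sum>a\<in>J. \<Sum>b\<in>J. (X b \<bullet> X a) * (\<sigma> a * \<sigma> b))" for \<sigma> :: "'i \<Rightarrow> real"
    by (simp add: power2_norm_eq_inner inner_sum_left inner_sum_right sum_distrib_left algebra_simps)
  have "(\<Sum>\<sigma>\<in>?\<Omega>. (norm (\<Sum>j\<in>J. \<sigma> j *\<^sub>R X j))^2)
      = (\<Sum>a\<in>J. \<Sum>b\<in>J. (X b \<bullet> X a) * (\<Sum>\<sigma>\<in>?\<Omega>. \<sigma> a * \<sigma> b))"
    unfolding e by (simp add: sum_distrib_left sum.swap[of _ ?\<Omega>])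
  also have "\<dots> = (\<Sum>a\<in>J. \<Sum>b\<in>J. (X b \<bullet> X a) * (if a = b then 2 ^ card I else 0))"
    by (intro sum.cong refl, subst corr[OF fin]) (use J in auto)
  also have "\<dots> = (\<Sum>a\<in>J. (norm (X a))^2 * 2 ^ card I)"
    by (simp add: finJ if_distrib power2_norm_eq_inner cong: if_cong)
  finally show ?thesis unfolding rademacher_exp_def by (simp add: sum_distrib_right[symmetric])
qed

lemma jensen:
  assumes fin: "finite I" and Z: "\<And>\<sigma>. Z \<sigma> \<ge> 0"
  shows "rademacher_exp I (\<lambda>\<sigma>. sqrt (Z \<sigma>)) \<le> sqrt (rademacher_exp I Z)"
proof -
  let ?\<Omega> = "PiE I (\<lambda>_. {-1,1::real})"
  define n :: real where "n = 2 ^ card I"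
  have n: "n > 0" unfolding n_def by simp
  have cn: "real (card ?\<Omega>) = n" unfolding n_def using fin by (simp add: card_Omega)
  have "(\<Sum>\<sigma>\<in>?\<Omega>. \<bar>sqrt (Z \<sigma>)\<bar> * \<bar>1\<bar>) \<le> L2_set (\<lambda>\<sigma>. sqrt (Z \<sigma>)) ?\<Omega> * L2_set (\<lambda>_. 1) ?\<Omega>"
    by (rule L2_set_mult_ineq)
  hence "(\<Sum>\<sigma>\<in>?\<Omega>. sqrt (Z \<sigma>)) \<le> sqrt (\<Sum>\<sigma>\<in>?\<Omega>. Z \<sigma>) * sqrt n"
    using Z cn by (simp add: L2_set_def)
  hence "(\<Sum>\<sigma>\<in>?\<Omega>. sqrt (Z \<sigma>)) / n \<le> sqrt (\<Sum>\<sigma>\<in>?\<Omega>. Z \<sigma>) * sqrt n / n"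
    using n by (simp add: divide_right_mono)
  also have "sqrt (\<Sum>\<sigma>\<in>?\<Omega>. Z \<sigma>) * sqrt n / n = sqrt ((\<Sum>\<sigma>\<in>?\<Omega>. Z \<sigma>) / n)"
    using n by (simp add: real_sqrt_divide field_simps)
  finally show ?thesis unfolding rademacher_exp_def n_def .
qed

lemma mv_sum:
  fixes M :: "real^'d^'d"
  shows "M *v (\<Sum>i\<in>S. r i *\<^sub>R v i) = (\<Sum>i\<in>S. r i *\<^sub>R (M *v v i))"
proof -
  have l: "linear (\<lambda>x. M *v x)" by simp
  show ?thesis by (simp only: linear_sum[OF l] linear_scale[OF l] o_def)
qed
lemma mv_add:
  fixes M :: "real^'d^'d"
  shows "M *v (\<Sum>t\<in>S. v t) = (\<Sum>t\<in>S. M *v v t)"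
proof -
  have l: "linear (\<lambda>x. M *v x)" by simp
  show ?thesis by (simp only: linear_sum[OF l] o_def)
qed

lemma norm21_cs:
  fixes A z :: "nat \<Rightarrow> real^'d"
  shows "(\<Sum>t\<in>{1..T}. A t \<bullet> z t) \<le> norm21 T A * sqrt (\<Sum>t\<in>{1..T}. (norm (z t))^2)"
proof -
  let ?N = "sqrt (\<Sum>t\<in>{1..T}. (norm (z t))^2)"
  have "(\<Sum>t\<in>{1..T}. A t \<bullet> z t) = (\<Sum>j\<in>UNIV. \<Sum>t\<in>{1..T}. A t $ j * z t $ j)"
    by (simp add: inner_vec_def) (rule sum.swap)
  also have "\<dots> \<le> (\<Sum>j\<in>UNIV. \<Sum>t\<in>{1..T}. \<bar>A t $ j\<bar> * \<bar>z t $ j\<bar>)"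
    by (intro sum_mono) (simp add: abs_mult[symmetric])
  also have "\<dots> \<le> (\<Sum>j\<in>UNIV. L2_set (\<lambda>t. A t $ j) {1..T} * L2_set (\<lambda>t. z t $ j) {1..T})"
    by (intro sum_mono L2_set_mult_ineq)
  also have "\<dots> \<le> (\<Sum>j\<in>UNIV. L2_set (\<lambda>t. A t $ j) {1..T} * ?N)"
  proof (intro sum_mono mult_left_mono)
    fix j
    show "0 \<le> L2_set (\<lambda>t. A t $ j) {1..T}" by (rule L2_set_nonneg)
    show "L2_set (\<lambda>t. z t $ j) {1..T} \<le> ?N" unfolding L2_set_def
    proof (intro real_sqrt_le_mono sum_mono)
      fix t
      have "\<bar>z t $ j\<bar> \<le> \<bar>norm (z t)\<bar>" using component_le_norm_cart[of "z t" j] by simp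
      thus "(z t $ j)^2 \<le> (norm (z t))^2" by (simp only: abs_le_square_iff)
    qed
  qed
  also have "\<dots> = norm21 T A * ?N" unfolding norm21_def L2_set_def by (simp add: sum_distrib_right)
  finally show ?thesis .
qed

lemma norm_col:
  fixes A :: "nat \<Rightarrow> real^'d"
  assumes "t \<in> {1..T}"
  shows "norm (A t) \<le> norm21 T A"
proof -
  have "norm (A t) \<le> (\<Sum>j\<in>UNIV. \<bar>A t $ j\<bar>)" by (rule norm_le_l1_cart)
  also have "\<dots> \<le> norm21 T A" unfolding norm21_def
  proof (intro sum_mono)
    fix j
    have "(A t $ j)^2 \<le> (\<Sum>t'\<in>{1..T}. (A t' $ j)^2)"
      by (rule member_le_sum[where f="\<lambda>t'. (A t' $ j)^2"]) (use assms in auto)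
    hence "sqrt ((A t $ j)^2) \<le> sqrt (\<Sum>t'\<in>{1..T}. (A t' $ j)^2)" by (rule real_sqrt_le_mono)
    thus "\<bar>A t $ j\<bar> \<le> sqrt (\<Sum>t'\<in>{1..T}. (A t' $ j)^2)" by simp
  qed
  finally show ?thesis .
qed

lemma norm21_nonneg: "norm21 T A \<ge> 0"
  unfolding norm21_def by (intro sum_nonneg real_sqrt_ge_zero) (simp add: sum_nonneg)

lemma pw_bound:
  fixes A w :: "nat \<Rightarrow> real^'d" and M :: "real^'d^'d"
  assumes nM: "\<And>v. norm (M *v v) = norm v"
    and nA: "(norm21 T A)^2 \<le> a^2" and na: "(norm a0)^2 \<le> b^2" and a: "a \<ge> 0" and b: "b \<ge> 0"
  shows "(\<Sum>t\<in>{1..T}. (A t + a0) \<bullet> (M *v w t)) \<le> a * sqrt (\<Sum>t\<in>{1..T}. (norm (w t))^2) + b * norm (\<Sum>t\<in>{1..T}. w t)"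
proof -
  have e: "(\<Sum>t\<in>{1..T}. (A t + a0) \<bullet> (M *v w t)) = (\<Sum>t\<in>{1..T}. A t \<bullet> (M *v w t)) + a0 \<bullet> (M *v (\<Sum>t\<in>{1..T}. w t))"
    by (simp add: inner_add_left sum.distrib mv_add inner_sum_right)
  have "(\<Sum>t\<in>{1..T}. A t \<bullet> (M *v w t)) \<le> norm21 T A * sqrt (\<Sum>t\<in>{1..T}. (norm (M *v w t))^2)"
    by (rule norm21_cs)
  also have "\<dots> = norm21 T A * sqrt (\<Sum>t\<in>{1..T}. (norm (w t))^2)" by (simp add: nM)
  also have "\<dots> \<le> a * sqrt (\<Sum>t\<in>{1..T}. (norm (w t))^2)"
    by (intro mult_right_mono) (use nA a norm21_nonneg[where T=T and A=A] power2_le_imp_le in \<open>auto simp: sum_nonneg\<close>)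
  finally have 1: "(\<Sum>t\<in>{1..T}. A t \<bullet> (M *v w t)) \<le> a * sqrt (\<Sum>t\<in>{1..T}. (norm (w t))^2)" .
  have "a0 \<bullet> (M *v (\<Sum>t\<in>{1..T}. w t)) \<le> norm a0 * norm (M *v (\<Sum>t\<in>{1..T}. w t))"
    by (rule norm_cauchy_schwarz)
  also have "\<dots> = norm a0 * norm (\<Sum>t\<in>{1..T}. w t)" by (simp add: nM)
  also have "\<dots> \<le> b * norm (\<Sum>t\<in>{1..T}. w t)"
    by (intro mult_right_mono) (use na b power2_le_imp_le in auto)
  finally have 2: "a0 \<bullet> (M *v (\<Sum>t\<in>{1..T}. w t)) \<le> b * norm (\<Sum>t\<in>{1..T}. w t)" .
  show ?thesis using e 1 2 by linarith
qed


lemma inner_sum_helper: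
  fixes M :: "real^'d^'d"
  shows "(\<Sum>i\<in>S. r i * (v \<bullet> (M *v z i))) = v \<bullet> (M *v (\<Sum>i\<in>S. r i *\<^sub>R z i))"
  by (simp only: mv_sum inner_sum_right inner_scaleR_right)

theorem lemma2:
  fixes T :: nat and m :: "nat \<Rightarrow> nat"
    and x :: "nat \<Rightarrow> nat \<Rightarrow> real^'d" and y :: "nat \<Rightarrow> nat \<Rightarrow> real"
    and \<gamma> \<beta> c :: real and l :: "real \<Rightarrow> real \<Rightarrow> real"
  assumes "T \<ge> 1" and "\<gamma> > 0" and "\<beta> > 0"
    and "admissible c l {h :: real^'d \<Rightarrow> real. linear h}"
  shows "2 * rademacher_exp {(t, i). t \<in> {1..T} \<and> i \<in> {1..m t}}
      (\<lambda>\<sigma>. SUP (A, a0, U) \<in> {(A :: nat \<Rightarrow> real^'d, a0 :: real^'d, U :: real^'d^'d).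
               transpose U ** U = mat 1 \<and> (norm21 T A)^2 \<le> real T / \<gamma> \<and> (norm a0)^2 \<le> 1 / \<beta>}.
            (\<Sum>t\<in>{1..T}. \<Sum>i\<in>{1..m t}. \<sigma> (t, i) * l (y t i) ((A t + a0) \<bullet> (transpose U *v x t i))))
    \<le> 2 * c * (sqrt (real T / \<gamma>) + sqrt (1 / \<beta>)) *
       sqrt (\<Sum>t\<in>{1..T}. real (m t) * sample_S (m t) (x t))"
proof -
  note g = assms(2) and be = assms(3) and adm = assms(4)
  define I where "I = {(t, i). t \<in> {1..T} \<and> i \<in> {1..m t}}"
  have Isig: "I = Sigma {1..T} (\<lambda>t. {1..m t})" unfolding I_def by auto
  have finI: "finite I" unfolding Isig by auto
  have sig: "(\<Sum>t\<in>{1..T}. \<Sum>i\<in>{1..m t}. G t i) = (\<Sum>j\<in>I. G (fst j) (snd j))" for G :: "nat \<Rightarrow> nat \<Rightarrow> 'z::comm_monoid_add"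
    by (subst sum.Sigma) (auto simp: Isig split_beta)
  define P where "P = {(A :: nat \<Rightarrow> real^'d, a0 :: real^'d, U :: real^'d^'d).
               transpose U ** U = mat 1 \<and> (norm21 T A)^2 \<le> real T / \<gamma> \<and> (norm a0)^2 \<le> 1 / \<beta>}"
  define f where "f = (\<lambda>(j::nat\<times>nat) (p::(nat \<Rightarrow> real^'d) \<times> (real^'d) \<times> (real^'d^'d)).
      case p of (A, a0, U) \<Rightarrow> (A (fst j) + a0) \<bullet> (transpose U *v x (fst j) (snd j)))"
  define \<phi> where "\<phi> = (\<lambda>j::nat\<times>nat. l (y (fst j) (snd j)))"
  define X where "X = (\<lambda>j::nat\<times>nat. x (fst j) (snd j))"
  define a where "a = sqrt (real T / \<gamma>)"
  define b where "b = sqrt (1 / \<beta>)"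
  define Q where "Q = (\<Sum>t\<in>{1..T}. \<Sum>i\<in>{1..m t}. (norm (x t i))^2)"
  define w where "w = (\<lambda>(\<sigma>::nat\<times>nat \<Rightarrow> real) t. \<Sum>i\<in>{1..m t}. \<sigma> (t, i) *\<^sub>R x t i)"
  have a0: "a \<ge> 0" and b0: "b \<ge> 0" unfolding a_def b_def using g be by auto
  have a2: "a^2 = real T / \<gamma>" and b2: "b^2 = 1 / \<beta>" unfolding a_def b_def using g be by auto
  have c0: "c \<ge> 0" using adm unfolding admissible_def by blast
  have conv: "(\<lambda>(A, a0, U). \<Sum>t\<in>{1..T}. \<Sum>i\<in>{1..m t}. \<sigma> (t, i) * l (y t i) ((A t + a0) \<bullet> (transpose U *v x t i)))
      = (\<lambda>p. \<Sum>j\<in>I. \<sigma> j * \<phi> j (f j p))" for \<sigma> :: "nat\<times>nat \<Rightarrow> real"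
    unfolding sig f_def \<phi>_def by (auto simp: fun_eq_iff)
  have Pne: "P \<noteq> {}"
  proof -
    have "norm21 T (\<lambda>_. 0 :: real^'d) = 0" unfolding norm21_def by simp
    hence "((\<lambda>_. 0), 0, mat 1) \<in> P" unfolding P_def using g be by (simp add: transpose_mat)
    thus ?thesis by blast
  qed
  have bnd: "\<bar>f j p\<bar> \<le> (a + b) * norm (X j)" if j: "j \<in> I" and p: "p \<in> P" for j p
  proof -
    obtain A a0 U where pe: "p = (A, a0, U)" by (cases p) auto
    have U: "transpose U ** U = mat 1" and nA: "(norm21 T A)^2 \<le> a^2" and na: "(norm a0)^2 \<le> b^2"
      using p unfolding pe P_def a2 b2 by auto
    have t: "fst j \<in> {1..T}" using j unfolding I_def by auto
    have "norm (A (fst j)) \<le> norm21 T A" by (rule norm_col[OF t])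
    also have "\<dots> \<le> a" using nA a0 norm21_nonneg[where T=T and A=A] power2_le_imp_le by blast
    finally have 1: "norm (A (fst j)) \<le> a" .
    have 2: "norm a0 \<le> b" using na b0 power2_le_imp_le by blast
    have "\<bar>f j p\<bar> \<le> norm (A (fst j) + a0) * norm (transpose U *v X j)"
      unfolding pe f_def X_def by (simp del: transpose_matrix_vector add: Cauchy_Schwarz_ineq2)
    also have "\<dots> = norm (A (fst j) + a0) * norm (X j)" by (simp only: orth_norm[OF U])
    also have "\<dots> \<le> (a + b) * norm (X j)"
      by (intro mult_right_mono) (use 1 2 norm_triangle_ineq[of "A (fst j)" a0] in auto)
    finally show ?thesis .
  qed
  have Lip: "\<bar>\<phi> j u - \<phi> j v\<bar> \<le> c * \<bar>u - v\<bar>" for j u v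
  proof -
    obtain e :: "real^'d" where e: "e \<in> Basis" using nonempty_Basis by blast
    have ee: "e \<bullet> e = 1" using e by simp
    have lin: "linear (\<lambda>z. r * (e \<bullet> z))" for r
      by (simp add: linear_iff inner_add_right algebra_simps)
    have H: "\<bar>l yy (h z) - l yy (h' z)\<bar> \<le> c * \<bar>h z - h' z\<bar>"
      if "linear h" "linear h'" for h h' :: "real^'d \<Rightarrow> real" and z yy
      using adm that unfolding admissible_def by blast
    have "\<bar>l yy (u * (e \<bullet> e)) - l yy (v * (e \<bullet> e))\<bar> \<le> c * \<bar>u * (e \<bullet> e) - v * (e \<bullet> e)\<bar>" for yy
      using H[of "\<lambda>z. u * (e \<bullet> z)" "\<lambda>z. v * (e \<bullet> z)", OF lin[of u] lin[of v]] by simp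
    thus ?thesis unfolding \<phi>_def using ee by simp
  qed
  have contr: "rademacher_exp I (\<lambda>\<sigma>. SUP p\<in>P. \<Sum>j\<in>I. \<sigma> j * \<phi> j (f j p))
       \<le> rademacher_exp I (\<lambda>\<sigma>. SUP p\<in>P. \<Sum>j\<in>I. \<sigma> j * (c * f j p))"
    by (rule contraction[OF finI Pne c0 bnd Lip])
  define N1 where "N1 = (\<lambda>\<sigma>. sqrt (\<Sum>t\<in>{1..T}. (norm (w \<sigma> t))^2))"
  define N2 where "N2 = (\<lambda>\<sigma>. norm (\<Sum>t\<in>{1..T}. w \<sigma> t))"
  have pw: "(SUP p\<in>P. \<Sum>j\<in>I. \<sigma> j * (c * f j p)) \<le> (c * a) * N1 \<sigma> + (c * b) * N2 \<sigma>" for \<sigma>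
  proof (rule cSUP_least[OF Pne])
    fix p assume p: "p \<in> P"
    obtain A a0 U where pe: "p = (A, a0, U)" by (cases p) auto
    have U: "transpose U ** U = mat 1" and nA: "(norm21 T A)^2 \<le> a^2" and na: "(norm a0)^2 \<le> b^2"
      using p unfolding pe P_def a2 b2 by auto
    define M where "M = transpose U"
    have nM: "norm (M *v v) = norm v" for v unfolding M_def by (rule orth_norm[OF U])
    have "(\<Sum>j\<in>I. \<sigma> j * f j p) = (\<Sum>t\<in>{1..T}. \<Sum>i\<in>{1..m t}. \<sigma> (t, i) * ((A t + a0) \<bullet> (M *v x t i)))"
      unfolding sig by (simp add: pe f_def M_def del: transpose_matrix_vector)
    also have "\<dots> = (\<Sum>t\<in>{1..T}. (A t + a0) \<bullet> (M *v w \<sigma> t))"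
      unfolding w_def by (simp only: inner_sum_helper)
    also have "\<dots> \<le> a * N1 \<sigma> + b * N2 \<sigma>" unfolding N1_def N2_def
      by (rule pw_bound[OF nM nA na a0 b0])
    finally have "(\<Sum>j\<in>I. \<sigma> j * f j p) \<le> a * N1 \<sigma> + b * N2 \<sigma>" .
    hence "c * (\<Sum>j\<in>I. \<sigma> j * f j p) \<le> c * (a * N1 \<sigma> + b * N2 \<sigma>)" using c0 by (rule mult_left_mono)
    thus "(\<Sum>j\<in>I. \<sigma> j * (c * f j p)) \<le> (c * a) * N1 \<sigma> + (c * b) * N2 \<sigma>"
      by (simp add: sum_distrib_left algebra_simps)
  qed
  have reidx: "(\<Sum>i\<in>{1..m t}. G (t, i)) = (\<Sum>j\<in>Pair t ` {1..m t}. G j)" for t and G :: "nat\<times>nat \<Rightarrow> 'z::comm_monoid_add"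
    by (simp add: sum.reindex inj_on_def)
  have E1: "rademacher_exp I N1 \<le> sqrt Q"
  proof -
    have "rademacher_exp I N1 \<le> sqrt (rademacher_exp I (\<lambda>\<sigma>. \<Sum>t\<in>{1..T}. (norm (w \<sigma> t))^2))"
      unfolding N1_def by (rule jensen[OF finI]) (simp add: sum_nonneg)
    also have "rademacher_exp I (\<lambda>\<sigma>. \<Sum>t\<in>{1..T}. (norm (w \<sigma> t))^2) = Q"
      unfolding rexp_sum Q_def
    proof (rule sum.cong[OF refl])
      fix t assume t: "t \<in> {1..T}"
      have sub: "Pair t ` {1..m t} \<subseteq> I" using t unfolding I_def by auto
      have "rademacher_exp I (\<lambda>\<sigma>. (norm (w \<sigma> t))^2) = rademacher_exp I (\<lambda>\<sigma>. (norm (\<Sum>j\<in>Pair t ` {1..m t}. \<sigma> j *\<^sub>R X j))^2)"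
        unfolding w_def X_def by (simp add: sum.reindex inj_on_def)
      also have "\<dots> = (\<Sum>j\<in>Pair t ` {1..m t}. (norm (X j))^2)" by (rule rad_sq[OF finI sub])
      also have "\<dots> = (\<Sum>i\<in>{1..m t}. (norm (x t i))^2)" unfolding X_def by (simp add: sum.reindex inj_on_def)
      finally show "rademacher_exp I (\<lambda>\<sigma>. (norm (w \<sigma> t))^2) = (\<Sum>i\<in>{1..m t}. (norm (x t i))^2)" .
    qed
    finally show ?thesis .
  qed
  have E2: "rademacher_exp I N2 \<le> sqrt Q"
  proof -
    have "rademacher_exp I N2 = rademacher_exp I (\<lambda>\<sigma>. sqrt ((norm (\<Sum>j\<in>I. \<sigma> j *\<^sub>R X j))^2))"
      unfolding N2_def w_def X_def sig by simp
    also have "\<dots> \<le> sqrt (rademacher_exp I (\<lambda>\<sigma>. (norm (\<Sum>j\<in>I. \<sigma> j *\<^sub>R X j))^2))"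
      by (rule jensen[OF finI]) simp
    also have "rademacher_exp I (\<lambda>\<sigma>. (norm (\<Sum>j\<in>I. \<sigma> j *\<^sub>R X j))^2) = Q"
      unfolding rad_sq[OF finI order.refl] Q_def X_def sig ..
    finally show ?thesis .
  qed
  have RHS: "(\<Sum>t\<in>{1..T}. real (m t) * sample_S (m t) (x t)) = Q"
    unfolding Q_def sample_S_def
  proof (intro sum.cong refl)
    fix t show "real (m t) * ((\<Sum>i\<in>{1..m t}. (norm (x t i))^2) / real (m t)) = (\<Sum>i\<in>{1..m t}. (norm (x t i))^2)"
      by (cases "m t = 0") simp_all
  qed
  have "2 * rademacher_exp I (\<lambda>\<sigma>. SUP p\<in>P. \<Sum>j\<in>I. \<sigma> j * \<phi> j (f j p))
      \<le> 2 * rademacher_exp I (\<lambda>\<sigma>. (c * a) * N1 \<sigma> + (c * b) * N2 \<sigma>)"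
    using contr rexp_mono[of I "\<lambda>\<sigma>. SUP p\<in>P. \<Sum>j\<in>I. \<sigma> j * (c * f j p)", OF pw] by linarith
  also have "\<dots> = 2 * ((c * a) * rademacher_exp I N1 + (c * b) * rademacher_exp I N2)"
    by (simp only: rexp_lin)
  also have "\<dots> \<le> 2 * ((c * a) * sqrt Q + (c * b) * sqrt Q)"
    using E1 E2 mult_left_mono[OF E1, of "c * a"] mult_left_mono[OF E2, of "c * b"] c0 a0 b0 by simp
  also have "\<dots> = 2 * c * (a + b) * sqrt Q" by (simp add: algebra_simps)
  finally show ?thesis unfolding RHS a_def b_def I_def[symmetric] P_def[symmetric] conv .
qed

end
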